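(* Let $\alpha>1$, $\varepsilon>0$, $\delta\in(0,1)$, and let $\pi^*$ be the function defined by $\pi^*(0)=0$, $\pi^*(n)=L(\pi^*(n-1))$ for $n>0$, where $L(q)=\max\{p\in[q,1]: D^\delta_\alpha(\mathrm{Ber}(p)\|\mathrm{Ber}(q))\le\varepsilon \text{ and } D^\delta_\alpha(\mathrm{Ber}(q)\|\mathrm{Ber}(p))\le\varepsilon\}$. Suppose $\pi^*(2) > 3\,\pi^*(1)$. Then, for the universe $U=\{1,2\}$, there is no optimal partition selection mechanism for $(\delta,\alpha,\varepsilon)$-RDP with $\Delta_1 = 2$; that is, there is no partition selection mechanism $M^*$ that is $(\delta,\alpha,\varepsilon)$-RDP for $\Delta_1=2$ such that $\mathbb{E}[|M^*(X)|]\ge\mathbb{E}[|M(X)|]$ for every dataset $X$ and every partition selection mechanism $M$ that is $(\delta,\alpha,\varepsilon)$-RDP for $\Delta_1 = 2$.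
   Context: $\mathrm{Ber}(p)$: Bernoulli distribution. For $\alpha>1$, $D_\alpha(P\|Q)=\frac{1}{\alpha-1}\log\sum_x P(x)^\alpha Q(x)^{1-\alpha}$ and $D^\delta_\alpha(P\|Q)=\inf\{D_\alpha(P'\|Q'): P=(1-\delta)P'+\delta P'',\ Q=(1-\delta)Q'+\delta Q''\}$ over probability distributions. A randomized algorithm $M$ is $(\delta,\alpha,\varepsilon)$-RDP w.r.t. a neighboring relation if $D^\delta_\alpha(M(X)\|M(X'))\le\varepsilon$ for all neighbors $X,X'$ (both orders). Datasets are $X\in\mathbb{Z}_{\ge0}^U$; $X, X'$ are neighbors for $\Delta_1=\Delta$ if $\|X-X'\|_1\le\Delta$. A partition selection mechanism is a randomized map $M$ from datasets to subsets of $U$ with $M(X)\subseteq\{u: X_u>0\}$ always. *)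

theory Defs
  imports "HOL-Probability.Probability"
begin

definition renyi_div :: "real \<Rightarrow> 'a pmf \<Rightarrow> 'a pmf \<Rightarrow> ereal" where
  "renyi_div \<alpha> P Q =
    (let S = (\<integral>\<^sup>+ x. (if pmf P x = 0 then 0
                       else if pmf Q x = 0 then \<infinity>
                       else ennreal (pmf P x powr \<alpha> * pmf Q x powr (1 - \<alpha>))) \<partial>count_space UNIV)
     in if S = \<infinity> then \<infinity> else ereal (ln (enn2real S) / (\<alpha> - 1)))"

definition approx_renyi_div :: "real \<Rightarrow> real \<Rightarrow> 'a pmf \<Rightarrow> 'a pmf \<Rightarrow> ereal" where
  "approx_renyi_div \<delta> \<alpha> P Q =
    Inf {renyi_div \<alpha> P' Q' | P' P'' Q' Q''.
           (\<forall>x. pmf P x = (1 - \<delta>) * pmf P' x + \<delta> * pmf P'' x) \<and>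
           (\<forall>x. pmf Q x = (1 - \<delta>) * pmf Q' x + \<delta> * pmf Q'' x)}"

definition L_fun :: "real \<Rightarrow> real \<Rightarrow> real \<Rightarrow> real \<Rightarrow> real" where
  "L_fun \<delta> \<alpha> \<epsilon> q = (GREATEST p. q \<le> p \<and> p \<le> 1 \<and>
      approx_renyi_div \<delta> \<alpha> (bernoulli_pmf p) (bernoulli_pmf q) \<le> ereal \<epsilon> \<and>
      approx_renyi_div \<delta> \<alpha> (bernoulli_pmf q) (bernoulli_pmf p) \<le> ereal \<epsilon>)"

primrec pi_star :: "real \<Rightarrow> real \<Rightarrow> real \<Rightarrow> nat \<Rightarrow> real" where
  "pi_star \<delta> \<alpha> \<epsilon> 0 = 0"
| "pi_star \<delta> \<alpha> \<epsilon> (Suc n) = L_fun \<delta> \<alpha> \<epsilon> (pi_star \<delta> \<alpha> \<epsilon> n)"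

definition dataset :: "'u set \<Rightarrow> ('u \<Rightarrow> nat) \<Rightarrow> bool" where
  "dataset U X \<longleftrightarrow> (\<forall>u. u \<notin> U \<longrightarrow> X u = 0)"

definition l1_neighbors :: "'u set \<Rightarrow> nat \<Rightarrow> ('u \<Rightarrow> nat) \<Rightarrow> ('u \<Rightarrow> nat) \<Rightarrow> bool" where
  "l1_neighbors U \<Delta> X X' \<longleftrightarrow> (\<Sum>u\<in>U. \<bar>int (X u) - int (X' u)\<bar>) \<le> int \<Delta>"

definition partition_selection :: "'u set \<Rightarrow> (('u \<Rightarrow> nat) \<Rightarrow> 'u set pmf) \<Rightarrow> bool" where
  "partition_selection U M \<longleftrightarrow>
     (\<forall>X. dataset U X \<longrightarrow> (\<forall>S \<in> set_pmf (M X). S \<subseteq> {u \<in> U. X u > 0}))"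

definition is_rdp :: "'u set \<Rightarrow> nat \<Rightarrow> real \<Rightarrow> real \<Rightarrow> real \<Rightarrow> (('u \<Rightarrow> nat) \<Rightarrow> 'b pmf) \<Rightarrow> bool" where
  "is_rdp U \<Delta> \<delta> \<alpha> \<epsilon> M \<longleftrightarrow>
     (\<forall>X X'. dataset U X \<longrightarrow> dataset U X' \<longrightarrow> l1_neighbors U \<Delta> X X' \<longrightarrow>
        approx_renyi_div \<delta> \<alpha> (M X) (M X') \<le> ereal \<epsilon> \<and>
        approx_renyi_div \<delta> \<alpha> (M X') (M X) \<le> ereal \<epsilon>)"

definition expected_size :: "'u set pmf \<Rightarrow> real" where
  "expected_size D = measure_pmf.expectation D (\<lambda>S. real (card S))"

end

theory Submission
  imports Defs
begin

lemma nn_count_ge_point: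
  fixes f :: "'a \<Rightarrow> ennreal"
  shows "f x \<le> (\<integral>\<^sup>+ y. f y \<partial>count_space UNIV)"
proof -
  have "(\<integral>\<^sup>+ y. f x * indicator {x} y \<partial>count_space UNIV) \<le> (\<integral>\<^sup>+ y. f y \<partial>count_space UNIV)"
    by (rule nn_integral_mono) (auto split: split_indicator)
  moreover have "(\<integral>\<^sup>+ y. f x * indicator {x} y \<partial>count_space UNIV) = f x"
    by (simp add: nn_integral_cmult_indicator)
  ultimately show ?thesis by simp
qed

lemma renyi_fin_support:
  assumes "renyi_div \<alpha> P Q \<noteq> \<infinity>" "pmf P x \<noteq> 0"
  shows "pmf Q x \<noteq> 0"
proof (rule ccontr)
  assume "\<not> pmf Q x \<noteq> 0"
  define g where "g = (\<lambda>x. (if pmf P x = 0 then 0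
                       else if pmf Q x = 0 then \<infinity>
                       else ennreal (pmf P x powr \<alpha> * pmf Q x powr (1 - \<alpha>))))"
  have "g x = \<infinity>" using assms(2) \<open>\<not> pmf Q x \<noteq> 0\<close> by (simp add: g_def)
  hence "(\<integral>\<^sup>+ y. g y \<partial>count_space UNIV) = \<infinity>"
    using nn_count_ge_point[of g x] by (simp add: top_unique)
  thus False using assms(1) unfolding renyi_div_def Let_def g_def by simp
qed

lemma approx_fin:
  assumes "approx_renyi_div \<delta> \<alpha> P Q \<le> ereal \<epsilon>"
  shows "\<exists>P' P'' Q' Q''. (\<forall>x. pmf P x = (1 - \<delta>) * pmf P' x + \<delta> * pmf P'' x) \<and>
           (\<forall>x. pmf Q x = (1 - \<delta>) * pmf Q' x + \<delta> * pmf Q'' x) \<and> renyi_div \<alpha> P' Q' \<noteq> \<infinity>"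
proof -
  let ?S = "{renyi_div \<alpha> P' Q' | P' P'' Q' Q''.
           (\<forall>x. pmf P x = (1 - \<delta>) * pmf P' x + \<delta> * pmf P'' x) \<and>
           (\<forall>x. pmf Q x = (1 - \<delta>) * pmf Q' x + \<delta> * pmf Q'' x)}"
  have "Inf ?S \<le> ereal \<epsilon>" using assms unfolding approx_renyi_div_def .
  hence "Inf ?S < \<infinity>" by (rule le_less_trans) simp
  then obtain y where y: "y \<in> ?S" "y < \<infinity>"
    by (meson Inf_less_iff)
  from y(1) obtain P' P'' Q' Q'' where d: "y = renyi_div \<alpha> P' Q'"
    "\<forall>x. pmf P x = (1 - \<delta>) * pmf P' x + \<delta> * pmf P'' x"
    "\<forall>x. pmf Q x = (1 - \<delta>) * pmf Q' x + \<delta> * pmf Q'' x" by blast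
  have "renyi_div \<alpha> P' Q' \<noteq> \<infinity>" using y(2) d(1) by simp
  thus ?thesis using d(2,3) by blast
qed

lemma approx_zero:
  assumes "approx_renyi_div \<delta> \<alpha> P Q \<le> ereal \<epsilon>" "0 \<le> \<delta>" "\<delta> < 1" "finite B"
    "\<forall>x\<in>B. pmf Q x = 0"
  shows "sum (pmf P) B \<le> \<delta>"
proof -
  obtain P' P'' Q' Q'' where dP: "\<forall>x. pmf P x = (1 - \<delta>) * pmf P' x + \<delta> * pmf P'' x"
    and dQ: "\<forall>x. pmf Q x = (1 - \<delta>) * pmf Q' x + \<delta> * pmf Q'' x"
    and fin: "renyi_div \<alpha> P' Q' \<noteq> \<infinity>"
    using approx_fin[OF assms(1)] by blast
  have eq: "pmf P x = \<delta> * pmf P'' x" if "x \<in> B" for x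
  proof -
    have "pmf Q x = 0" using that assms(5) by blast
    moreover have "(1 - \<delta>) * pmf Q' x \<ge> 0" "\<delta> * pmf Q'' x \<ge> 0"
      using assms(2,3) by auto
    ultimately have "(1 - \<delta>) * pmf Q' x = 0" using dQ by (metis add_nonneg_eq_0_iff)
    hence "pmf Q' x = 0" using assms(3) by simp
    hence "pmf P' x = 0" using renyi_fin_support[OF fin] by blast
    thus ?thesis using dP by simp
  qed
  have "sum (pmf P) B = \<delta> * sum (pmf P'') B"
    using eq by (simp add: sum_distrib_left)
  also have "sum (pmf P'') B \<le> 1"
    using measure_measure_pmf_finite[OF assms(4), of P''] measure_pmf.prob_le_1 by metis
  hence "\<delta> * sum (pmf P'') B \<le> \<delta>" using assms(2) by (simp add: mult_left_le)
  finally show ?thesis .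
qed

lemma renyi_self: "renyi_div \<alpha> R R = 0"
proof -
  have "(\<lambda>x. (if pmf R x = 0 then 0
                       else if pmf R x = 0 then \<infinity>
                       else ennreal (pmf R x powr \<alpha> * pmf R x powr (1 - \<alpha>)))) = (\<lambda>x. ennreal (pmf R x))"
  proof
    fix x
    show "(if pmf R x = 0 then 0
                       else if pmf R x = 0 then \<infinity>
                       else ennreal (pmf R x powr \<alpha> * pmf R x powr (1 - \<alpha>))) = ennreal (pmf R x)"
    proof (cases "pmf R x = 0")
      case False
      hence "pmf R x > 0" using pmf_nonneg[of R x] by linarith
      hence "pmf R x powr \<alpha> * pmf R x powr (1 - \<alpha>) = pmf R x"
        by (simp add: powr_add[symmetric])
      thus ?thesis using False by simp
    qed simp
  qed
  thus ?thesis unfolding renyi_div_def Let_def by (simp add: nn_integral_pmf_eq_1 zero_ereal_def)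
qed

lemma approx_common:
  assumes "\<forall>x. pmf P x = (1 - \<delta>) * pmf R x + \<delta> * pmf P'' x"
    "\<forall>x. pmf Q x = (1 - \<delta>) * pmf R x + \<delta> * pmf Q'' x"
  shows "approx_renyi_div \<delta> \<alpha> P Q \<le> 0"
  unfolding approx_renyi_div_def
  apply (rule Inf_lower2[where u = 0])
  using assms renyi_self[of \<alpha> R] by auto

lemma renyi_map:
  assumes "inj f"
  shows "renyi_div \<alpha> (map_pmf f P) (map_pmf f Q) = renyi_div \<alpha> P Q"
proof -
  define g where "g = (\<lambda>x. (if pmf P x = 0 then 0
                       else if pmf Q x = 0 then \<infinity>
                       else ennreal (pmf P x powr \<alpha> * pmf Q x powr (1 - \<alpha>))))"
  define h where "h = (\<lambda>x. (if pmf (map_pmf f P) x = 0 then 0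
                       else if pmf (map_pmf f Q) x = 0 then \<infinity>
                       else ennreal (pmf (map_pmf f P) x powr \<alpha> * pmf (map_pmf f Q) x powr (1 - \<alpha>))))"
  have hf: "h (f x) = g x" for x
    unfolding h_def g_def using pmf_map_inj'[OF assms] by simp
  have hout: "h y = 0" if "y \<notin> range f" for y
  proof -
    have "y \<notin> f ` set_pmf P" using that by blast
    thus ?thesis unfolding h_def by (simp add: pmf_map_outside)
  qed
  have "(\<integral>\<^sup>+ y. h y \<partial>count_space UNIV) = (\<integral>\<^sup>+ y. h y * indicator (range f) y \<partial>count_space UNIV)"
    by (rule nn_integral_cong) (auto simp: hout split: split_indicator)
  also have "\<dots> = (\<integral>\<^sup>+ x. h (f x) * indicator UNIV x \<partial>count_space UNIV)"
    using nn_integral_count_compose_inj[of f UNIV h] assms by simp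
  also have "\<dots> = (\<integral>\<^sup>+ x. g x \<partial>count_space UNIV)" by (simp add: hf)
  finally show ?thesis unfolding renyi_div_def Let_def g_def h_def by simp
qed

lemma decomp_map:
  assumes "inj f" "\<forall>x. pmf P x = (1 - \<delta>) * pmf P' x + \<delta> * pmf P'' x"
  shows "\<forall>y. pmf (map_pmf f P) y = (1 - \<delta>) * pmf (map_pmf f P') y + \<delta> * pmf (map_pmf f P'') y"
proof
  fix y show "pmf (map_pmf f P) y = (1 - \<delta>) * pmf (map_pmf f P') y + \<delta> * pmf (map_pmf f P'') y"
  proof (cases "y \<in> range f")
    case True
    then obtain x where "y = f x" by blast
    thus ?thesis using assms by (simp add: pmf_map_inj')
  next
    case False
    hence "y \<notin> f ` set_pmf M" for M by blast
    thus ?thesis by (simp add: pmf_map_outside)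
  qed
qed

lemma approx_map:
  assumes "inj f"
  shows "approx_renyi_div \<delta> \<alpha> (map_pmf f P) (map_pmf f Q) \<le> approx_renyi_div \<delta> \<alpha> P Q"
  unfolding approx_renyi_div_def
proof (rule Inf_mono)
  fix b assume "b \<in> {renyi_div \<alpha> P' Q' | P' P'' Q' Q''.
           (\<forall>x. pmf P x = (1 - \<delta>) * pmf P' x + \<delta> * pmf P'' x) \<and>
           (\<forall>x. pmf Q x = (1 - \<delta>) * pmf Q' x + \<delta> * pmf Q'' x)}"
  then obtain P' P'' Q' Q'' where b: "b = renyi_div \<alpha> P' Q'" and
    dP: "\<forall>x. pmf P x = (1 - \<delta>) * pmf P' x + \<delta> * pmf P'' x" and
    dQ: "\<forall>x. pmf Q x = (1 - \<delta>) * pmf Q' x + \<delta> * pmf Q'' x" by blast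
  show "\<exists>a\<in>{renyi_div \<alpha> P' Q' | P' P'' Q' Q''.
           (\<forall>x. pmf (map_pmf f P) x = (1 - \<delta>) * pmf P' x + \<delta> * pmf P'' x) \<and>
           (\<forall>x. pmf (map_pmf f Q) x = (1 - \<delta>) * pmf Q' x + \<delta> * pmf Q'' x)}. a \<le> b"
  proof (rule bexI)
    show "renyi_div \<alpha> (map_pmf f P') (map_pmf f Q') \<le> b"
      using renyi_map[OF assms, of \<alpha> P' Q'] b by simp
    show "renyi_div \<alpha> (map_pmf f P') (map_pmf f Q') \<in> {renyi_div \<alpha> P' Q' | P' P'' Q' Q''.
           (\<forall>x. pmf (map_pmf f P) x = (1 - \<delta>) * pmf P' x + \<delta> * pmf P'' x) \<and>
           (\<forall>x. pmf (map_pmf f Q) x = (1 - \<delta>) * pmf Q' x + \<delta> * pmf Q'' x)}"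
      using decomp_map[OF assms dP] decomp_map[OF assms dQ] by blast
  qed
qed


definition okf :: "real \<Rightarrow> real \<Rightarrow> bool" where
  "okf a b = ((a = 0 \<or> b \<noteq> 0) \<and> (a = 1 \<or> b \<noteq> 1))"

definition hf :: "real \<Rightarrow> real \<Rightarrow> real \<Rightarrow> real" where
  "hf \<alpha> a b = a powr \<alpha> * b powr (1 - \<alpha>) + (1 - a) powr \<alpha> * (1 - b) powr (1 - \<alpha>)"

definition lo :: "real \<Rightarrow> real \<Rightarrow> real" where "lo \<delta> p = max 0 ((p - \<delta>) / (1 - \<delta>))"
definition hi :: "real \<Rightarrow> real \<Rightarrow> real" where "hi \<delta> p = min 1 (p / (1 - \<delta>))"

lemma bern_eq:
  fixes P :: "bool pmf"
  shows "P = bernoulli_pmf (pmf P True)"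
proof -
  have s: "pmf P True + pmf P False = 1" using sum_pmf_eq_1[of UNIV P, OF finite subset_UNIV] by (simp add: UNIV_bool add.commute)
  show ?thesis
  proof (rule pmf_eqI)
    fix b show "pmf P b = pmf (bernoulli_pmf (pmf P True)) b"
      using s pmf_le_1[of P True] pmf_nonneg[of P True]
      by (cases b) (auto simp: pmf_bernoulli_True pmf_bernoulli_False)
  qed
qed

lemma renyi_bern:
  assumes "0 \<le> a" "a \<le> 1" "0 \<le> b" "b \<le> 1"
  shows "renyi_div \<alpha> (bernoulli_pmf a) (bernoulli_pmf b) =
     (if okf a b then ereal (ln (hf \<alpha> a b) / (\<alpha> - 1)) else \<infinity>)"
proof -
  define g where "g = (\<lambda>x. (if pmf (bernoulli_pmf a) x = 0 then 0
                       else if pmf (bernoulli_pmf b) x = 0 then \<infinity>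
                       else ennreal (pmf (bernoulli_pmf a) x powr \<alpha> * pmf (bernoulli_pmf b) x powr (1 - \<alpha>))))"
  have I: "(\<integral>\<^sup>+ x. g x \<partial>count_space UNIV) = g True + g False"
    by (simp add: nn_integral_count_space_finite UNIV_bool)
  have gT: "g True = (if a = 0 then 0 else if b = 0 then \<infinity> else ennreal (a powr \<alpha> * b powr (1 - \<alpha>)))"
    using assms by (simp add: g_def pmf_bernoulli_True)
  have gF: "g False = (if 1 - a = 0 then 0 else if 1 - b = 0 then \<infinity>
        else ennreal ((1 - a) powr \<alpha> * (1 - b) powr (1 - \<alpha>)))"
    using assms by (simp add: g_def pmf_bernoulli_False)
  show ?thesis
  proof (cases "okf a b")
    case True
    have gT': "g True = ennreal (a powr \<alpha> * b powr (1 - \<alpha>))"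
      using True gT unfolding okf_def by auto
    have gF': "g False = ennreal ((1 - a) powr \<alpha> * (1 - b) powr (1 - \<alpha>))"
      using True gF unfolding okf_def by auto
    have "g True + g False = ennreal (hf \<alpha> a b)"
      unfolding gT' gF' hf_def by (simp add: ennreal_plus)
    moreover have "hf \<alpha> a b \<ge> 0" unfolding hf_def by simp
    ultimately show ?thesis using True I unfolding renyi_div_def Let_def g_def[symmetric]
      by simp
  next
    case False
    hence "g True = \<infinity> \<or> g False = \<infinity>" using gT gF unfolding okf_def by auto
    hence "g True + g False = \<infinity>" by auto
    thus ?thesis using False I unfolding renyi_div_def Let_def g_def[symmetric] by simp
  qed
qed

lemma hf_pos:
  assumes "okf a b" "0 \<le> a" "a \<le> 1" "0 \<le> b" "b \<le> 1"
  shows "hf \<alpha> a b > 0"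
proof (cases "a = 0")
  case True
  hence "b < 1" using assms unfolding okf_def by auto
  hence "(1 - a) powr \<alpha> * (1 - b) powr (1 - \<alpha>) > 0" using True by simp
  thus ?thesis unfolding hf_def by (simp add: add_nonneg_pos)
next
  case False
  hence "b > 0" "a > 0" using assms unfolding okf_def by auto
  hence "a powr \<alpha> * b powr (1 - \<alpha>) > 0" by simp
  thus ?thesis unfolding hf_def by (simp add: add_pos_nonneg)
qed

lemma renyi_le:
  assumes "\<alpha> > 1" "okf a b" "0 \<le> a" "a \<le> 1" "0 \<le> b" "b \<le> 1"
  shows "renyi_div \<alpha> (bernoulli_pmf a) (bernoulli_pmf b) \<le> ereal t \<longleftrightarrow> hf \<alpha> a b \<le> exp ((\<alpha> - 1) * t)"
proof -
  have h: "hf \<alpha> a b > 0" using hf_pos assms(2-6) by blast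
  have "renyi_div \<alpha> (bernoulli_pmf a) (bernoulli_pmf b) \<le> ereal t \<longleftrightarrow> ln (hf \<alpha> a b) / (\<alpha> - 1) \<le> t"
    using renyi_bern[OF assms(3-6)] assms(2) by simp
  also have "\<dots> \<longleftrightarrow> ln (hf \<alpha> a b) \<le> (\<alpha> - 1) * t"
    using assms(1) by (simp add: divide_le_eq mult.commute)
  also have "\<dots> \<longleftrightarrow> ln (hf \<alpha> a b) \<le> ln (exp ((\<alpha> - 1) * t))" by simp
  also have "\<dots> \<longleftrightarrow> hf \<alpha> a b \<le> exp ((\<alpha> - 1) * t)" using h by (subst ln_le_cancel_iff) auto
  finally show ?thesis .
qed

lemma decomp1:
  assumes "0 < \<delta>" "\<delta> < 1" "0 \<le> p" "p \<le> 1"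
    "\<forall>x. pmf (bernoulli_pmf p) x = (1 - \<delta>) * pmf P' x + \<delta> * pmf P'' x"
  shows "lo \<delta> p \<le> pmf P' True \<and> pmf P' True \<le> hi \<delta> p"
proof -
  define a where "a = pmf P' True"
  define c where "c = pmf P'' True"
  have p: "p = (1 - \<delta>) * a + \<delta> * c" using assms(5)[rule_format, of True] assms(3,4)
    by (simp add: a_def c_def pmf_bernoulli_True)
  have a: "0 \<le> a" "a \<le> 1" unfolding a_def by (auto simp: pmf_le_1)
  have c: "0 \<le> \<delta> * c" "\<delta> * c \<le> \<delta>" unfolding c_def using assms(1)
    by (auto simp: pmf_le_1 mult_left_le)
  have "(p - \<delta>) / (1 - \<delta>) \<le> a" using assms(2) p c by (simp add: divide_le_eq algebra_simps)
  moreover have "a \<le> p / (1 - \<delta>)" using assms(2) p c by (simp add: le_divide_eq algebra_simps)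
  ultimately show ?thesis using a unfolding lo_def hi_def a_def by auto
qed

lemma decomp2:
  assumes "0 < \<delta>" "\<delta> < 1" "0 \<le> p" "p \<le> 1" "lo \<delta> p \<le> a" "a \<le> hi \<delta> p"
  shows "0 \<le> a \<and> a \<le> 1 \<and> (\<exists>c. \<forall>x. pmf (bernoulli_pmf p) x = (1 - \<delta>) * pmf (bernoulli_pmf a) x + \<delta> * pmf (bernoulli_pmf c) x)"
proof -
  have a: "0 \<le> a" "a \<le> 1" "(p - \<delta>) / (1 - \<delta>) \<le> a" "a \<le> p / (1 - \<delta>)"
    using assms(5,6) unfolding lo_def hi_def by auto
  have a1: "p - \<delta> \<le> (1 - \<delta>) * a" using a(3) assms(2) by (simp add: divide_le_eq mult.commute)
  have a2: "(1 - \<delta>) * a \<le> p" using a(4) assms(2) by (simp add: le_divide_eq mult.commute)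
  define c where "c = (p - (1 - \<delta>) * a) / \<delta>"
  have c: "0 \<le> c" "c \<le> 1" unfolding c_def using a1 a2 assms(1) by (auto simp: divide_le_eq)
  have dc: "\<delta> * c = p - (1 - \<delta>) * a" unfolding c_def using assms(1) by simp
  have "\<forall>x. pmf (bernoulli_pmf p) x = (1 - \<delta>) * pmf (bernoulli_pmf a) x + \<delta> * pmf (bernoulli_pmf c) x"
  proof
    fix x show "pmf (bernoulli_pmf p) x = (1 - \<delta>) * pmf (bernoulli_pmf a) x + \<delta> * pmf (bernoulli_pmf c) x"
      using a c dc assms(3,4)
      by (cases x) (simp_all add: pmf_bernoulli_True pmf_bernoulli_False algebra_simps)
  qed
  thus ?thesis using a by blast
qed


lemma approx_bern_fwd:
  assumes "\<alpha> > 1" "0 < \<delta>" "\<delta> < 1" "0 \<le> p" "p \<le> 1" "0 \<le> q" "q \<le> 1"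
    "approx_renyi_div \<delta> \<alpha> (bernoulli_pmf p) (bernoulli_pmf q) \<le> ereal \<epsilon>" "\<eta> > 0"
  shows "\<exists>a b. lo \<delta> p \<le> a \<and> a \<le> hi \<delta> p \<and> lo \<delta> q \<le> b \<and> b \<le> hi \<delta> q \<and>
     0 \<le> a \<and> a \<le> 1 \<and> 0 \<le> b \<and> b \<le> 1 \<and> okf a b \<and> hf \<alpha> a b \<le> exp ((\<alpha> - 1) * (\<epsilon> + \<eta>))"
proof -
  let ?S = "{renyi_div \<alpha> P' Q' | P' P'' Q' Q''.
           (\<forall>x. pmf (bernoulli_pmf p) x = (1 - \<delta>) * pmf P' x + \<delta> * pmf P'' x) \<and>
           (\<forall>x. pmf (bernoulli_pmf q) x = (1 - \<delta>) * pmf Q' x + \<delta> * pmf Q'' x)}"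
  have "Inf ?S \<le> ereal \<epsilon>" using assms(8) unfolding approx_renyi_div_def .
  also have "ereal \<epsilon> < ereal (\<epsilon> + \<eta>)" using assms(9) by simp
  finally have "Inf ?S < ereal (\<epsilon> + \<eta>)" .
  then obtain y where y: "y \<in> ?S" "y < ereal (\<epsilon> + \<eta>)"
    by (meson Inf_less_iff)
  from y(1) obtain P' P'' Q' Q'' where d: "y = renyi_div \<alpha> P' Q'"
    "\<forall>x. pmf (bernoulli_pmf p) x = (1 - \<delta>) * pmf P' x + \<delta> * pmf P'' x"
    "\<forall>x. pmf (bernoulli_pmf q) x = (1 - \<delta>) * pmf Q' x + \<delta> * pmf Q'' x" by blast
  define a where "a = pmf P' True"
  define b where "b = pmf Q' True"
  have ab: "0 \<le> a" "a \<le> 1" "0 \<le> b" "b \<le> 1" unfolding a_def b_def by (auto simp: pmf_le_1)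
  have P': "P' = bernoulli_pmf a" unfolding a_def by (rule bern_eq)
  have Q': "Q' = bernoulli_pmf b" unfolding b_def by (rule bern_eq)
  have ra: "lo \<delta> p \<le> a \<and> a \<le> hi \<delta> p" unfolding a_def using decomp1[OF assms(2-5) d(2)] .
  have rb: "lo \<delta> q \<le> b \<and> b \<le> hi \<delta> q" unfolding b_def using decomp1[OF assms(2,3,6,7) d(3)] .
  have lt: "renyi_div \<alpha> (bernoulli_pmf a) (bernoulli_pmf b) < ereal (\<epsilon> + \<eta>)"
    using y(2) d(1) P' Q' by simp
  hence ok: "okf a b" using renyi_bern[OF ab] by (cases "okf a b") auto
  have "hf \<alpha> a b \<le> exp ((\<alpha> - 1) * (\<epsilon> + \<eta>))"
    using renyi_le[OF assms(1) ok ab, of "\<epsilon> + \<eta>"] lt by (simp add: less_imp_le)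
  thus ?thesis using ra rb ab ok by blast
qed

lemma approx_bern_bwd:
  assumes "\<alpha> > 1" "0 < \<delta>" "\<delta> < 1" "0 \<le> p" "p \<le> 1" "0 \<le> q" "q \<le> 1"
    "\<forall>\<eta>>0. \<exists>a b. lo \<delta> p \<le> a \<and> a \<le> hi \<delta> p \<and> lo \<delta> q \<le> b \<and> b \<le> hi \<delta> q \<and>
        okf a b \<and> hf \<alpha> a b \<le> exp ((\<alpha> - 1) * (\<epsilon> + \<eta>))"
  shows "approx_renyi_div \<delta> \<alpha> (bernoulli_pmf p) (bernoulli_pmf q) \<le> ereal \<epsilon>"
proof (rule ereal_le_epsilon2)
  fix \<eta> :: real assume "0 < \<eta>"
  then obtain a b where ab: "lo \<delta> p \<le> a" "a \<le> hi \<delta> p" "lo \<delta> q \<le> b" "b \<le> hi \<delta> q"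
     "okf a b" "hf \<alpha> a b \<le> exp ((\<alpha> - 1) * (\<epsilon> + \<eta>))" using assms(8) by blast
  obtain c where a: "0 \<le> a" "a \<le> 1"
    "\<forall>x. pmf (bernoulli_pmf p) x = (1 - \<delta>) * pmf (bernoulli_pmf a) x + \<delta> * pmf (bernoulli_pmf c) x"
    using decomp2[OF assms(2-5) ab(1,2)] by blast
  obtain d where b: "0 \<le> b" "b \<le> 1"
    "\<forall>x. pmf (bernoulli_pmf q) x = (1 - \<delta>) * pmf (bernoulli_pmf b) x + \<delta> * pmf (bernoulli_pmf d) x"
    using decomp2[OF assms(2,3,6,7) ab(3,4)] by blast
  have r: "renyi_div \<alpha> (bernoulli_pmf a) (bernoulli_pmf b) \<le> ereal (\<epsilon> + \<eta>)"
    using renyi_le[OF assms(1) ab(5) a(1,2) b(1,2)] ab(6) by simp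
  have "approx_renyi_div \<delta> \<alpha> (bernoulli_pmf p) (bernoulli_pmf q) \<le> ereal (\<epsilon> + \<eta>)"
    unfolding approx_renyi_div_def
    apply (rule Inf_lower2[OF _ r])
    using a(3) b(3) by blast
  thus "approx_renyi_div \<delta> \<alpha> (bernoulli_pmf p) (bernoulli_pmf q) \<le> ereal \<epsilon> + ereal \<eta>" by simp
qed


definition K :: "real \<Rightarrow> real \<Rightarrow> (real \<times> real) set" where
  "K \<alpha> c = {z. 0 \<le> fst z \<and> fst z \<le> 1 \<and> 0 \<le> snd z \<and> snd z \<le> 1 \<and> okf (fst z) (snd z) \<and>
      hf \<alpha> (fst z) (snd z) \<le> c}"

lemma zero_powr_test: "(0::real) powr a = 0" by simp

lemma closed_K:
  assumes "\<alpha> > 1"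
  shows "closed (K \<alpha> c)"
  unfolding closed_sequential_limits
proof (intro allI impI, elim conjE)
  fix x l assume mem: "\<forall>n. x n \<in> K \<alpha> c" and lim: "x \<longlonglongrightarrow> l"
  define a where "a n = fst (x n)" for n
  define b where "b n = snd (x n)" for n
  define a0 where "a0 = fst l"
  define b0 where "b0 = snd l"
  have la: "a \<longlonglongrightarrow> a0" unfolding a_def a0_def by (rule tendsto_fst[OF lim])
  have lb: "b \<longlonglongrightarrow> b0" unfolding b_def b0_def by (rule tendsto_snd[OF lim])
  have bd: "0 \<le> a n" "a n \<le> 1" "0 \<le> b n" "b n \<le> 1" "okf (a n) (b n)" "hf \<alpha> (a n) (b n) \<le> c" for n
    using mem unfolding K_def a_def b_def by auto
  have la1: "(\<lambda>n. 1 - a n) \<longlonglongrightarrow> 1 - a0" by (intro tendsto_intros la)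
  have lb1: "(\<lambda>n. 1 - b n) \<longlonglongrightarrow> 1 - b0" by (intro tendsto_intros lb)
  have a0b: "0 \<le> a0" "a0 \<le> 1" "0 \<le> b0" "b0 \<le> 1"
    using tendsto_le[OF trivial_limit_sequentially la tendsto_const] tendsto_le[OF trivial_limit_sequentially tendsto_const la]
      tendsto_le[OF trivial_limit_sequentially lb tendsto_const] tendsto_le[OF trivial_limit_sequentially tendsto_const lb] bd
    by auto
  have t1le: "a n powr \<alpha> * b n powr (1 - \<alpha>) \<le> c" for n
    using bd(6)[of n] unfolding hf_def
    by (smt (verit) mult_nonneg_nonneg powr_ge_zero)
  have t2le: "(1 - a n) powr \<alpha> * (1 - b n) powr (1 - \<alpha>) \<le> c" for n
    using bd(6)[of n] unfolding hf_def
    by (smt (verit) mult_nonneg_nonneg powr_ge_zero)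
  have c0: "0 \<le> c" using t1le[of 0] by (smt (verit) mult_nonneg_nonneg powr_ge_zero)
  have P1: "a n powr \<alpha> \<le> c * b n powr (\<alpha> - 1)" for n
  proof (cases "b n = 0")
    case True
    hence "a n = 0" using bd(5)[of n] unfolding okf_def by auto
    thus ?thesis using True by simp
  next
    case False
    hence bp: "b n > 0" using bd(3)[of n] by simp
    have "a n powr \<alpha> = (a n powr \<alpha> * b n powr (1 - \<alpha>)) * b n powr (\<alpha> - 1)"
      using bp by (simp add: mult.assoc powr_add[symmetric])
    also have "\<dots> \<le> c * b n powr (\<alpha> - 1)"
      by (rule mult_right_mono[OF t1le]) simp
    finally show ?thesis .
  qed
  have P2: "(1 - a n) powr \<alpha> \<le> c * (1 - b n) powr (\<alpha> - 1)" for n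
  proof (cases "b n = 1")
    case True
    hence "a n = 1" using bd(5)[of n] unfolding okf_def by auto
    thus ?thesis using True by simp
  next
    case False
    hence bp: "1 - b n > 0" using bd(4)[of n] by simp
    have "(1 - a n) powr \<alpha> = ((1 - a n) powr \<alpha> * (1 - b n) powr (1 - \<alpha>)) * (1 - b n) powr (\<alpha> - 1)"
      using bp by (simp add: mult.assoc powr_add[symmetric])
    also have "\<dots> \<le> c * (1 - b n) powr (\<alpha> - 1)"
      by (rule mult_right_mono[OF t2le]) simp
    finally show ?thesis .
  qed
  have ev_a: "\<forall>\<^sub>F n in sequentially. 0 \<le> a n" using bd(1) by simp
  have ev_a1: "\<forall>\<^sub>F n in sequentially. 0 \<le> 1 - a n" using bd(2) by simp
  have ev_b: "\<forall>\<^sub>F n in sequentially. 0 \<le> b n" using bd(3) by simp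
  have ev_b1: "\<forall>\<^sub>F n in sequentially. 0 \<le> 1 - b n" using bd(4) by simp
  have LA: "(\<lambda>n. a n powr \<alpha>) \<longlonglongrightarrow> a0 powr \<alpha>"
    using tendsto_powr'[OF la tendsto_const] ev_a assms by auto
  have LA1: "(\<lambda>n. (1 - a n) powr \<alpha>) \<longlonglongrightarrow> (1 - a0) powr \<alpha>"
    using tendsto_powr'[OF la1 tendsto_const] ev_a1 assms by auto
  have LB: "(\<lambda>n. b n powr (\<alpha> - 1)) \<longlonglongrightarrow> b0 powr (\<alpha> - 1)"
    using tendsto_powr'[OF lb tendsto_const] ev_b assms by auto
  have LB1: "(\<lambda>n. (1 - b n) powr (\<alpha> - 1)) \<longlonglongrightarrow> (1 - b0) powr (\<alpha> - 1)"
    using tendsto_powr'[OF lb1 tendsto_const] ev_b1 assms by auto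
  have Q1: "a0 powr \<alpha> \<le> c * b0 powr (\<alpha> - 1)"
    by (rule tendsto_le[OF trivial_limit_sequentially tendsto_mult[OF tendsto_const LB] LA])
       (simp add: P1)
  have Q2: "(1 - a0) powr \<alpha> \<le> c * (1 - b0) powr (\<alpha> - 1)"
    by (rule tendsto_le[OF trivial_limit_sequentially tendsto_mult[OF tendsto_const LB1] LA1])
       (simp add: P2)
  have T1: "(\<lambda>n. a n powr \<alpha> * b n powr (1 - \<alpha>)) \<longlonglongrightarrow> a0 powr \<alpha> * b0 powr (1 - \<alpha>)"
    if "b0 \<noteq> 0"
    by (intro tendsto_mult LA tendsto_powr lb tendsto_const that)
  have T2: "(\<lambda>n. (1 - a n) powr \<alpha> * (1 - b n) powr (1 - \<alpha>)) \<longlonglongrightarrow> (1 - a0) powr \<alpha> * (1 - b0) powr (1 - \<alpha>)"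
    if "b0 \<noteq> 1"
    using that by (intro tendsto_mult LA1 tendsto_powr lb1 tendsto_const) simp
  have T1le: "a0 powr \<alpha> * b0 powr (1 - \<alpha>) \<le> c" if "b0 \<noteq> 0"
    by (rule tendsto_le[OF trivial_limit_sequentially tendsto_const T1[OF that]]) (simp add: t1le)
  have T2le: "(1 - a0) powr \<alpha> * (1 - b0) powr (1 - \<alpha>) \<le> c" if "b0 \<noteq> 1"
    by (rule tendsto_le[OF trivial_limit_sequentially tendsto_const T2[OF that]]) (simp add: t2le)
  have "okf a0 b0 \<and> hf \<alpha> a0 b0 \<le> c"
  proof (cases "b0 = 0")
    case True
    hence "a0 powr \<alpha> \<le> 0" using Q1 assms by simp
    hence "a0 = 0" using a0b by (smt (verit) powr_eq_0_iff powr_ge_zero)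
    thus ?thesis using True T2le unfolding okf_def hf_def by simp
  next
    case False
    note F = False
    show ?thesis
    proof (cases "b0 = 1")
      case True
      hence "(1 - a0) powr \<alpha> \<le> 0" using Q2 assms by simp
      hence "a0 = 1" using a0b by (smt (verit) powr_eq_0_iff powr_ge_zero)
      thus ?thesis using True T1le F unfolding okf_def hf_def by simp
    next
      case False
      have "(\<lambda>n. hf \<alpha> (a n) (b n)) \<longlonglongrightarrow> hf \<alpha> a0 b0"
        unfolding hf_def by (intro tendsto_add T1 T2 F False)
      hence "hf \<alpha> a0 b0 \<le> c"
        by (rule tendsto_le[OF trivial_limit_sequentially tendsto_const]) (simp add: bd(6))
      thus ?thesis using F False unfolding okf_def by simp
    qed
  qed
  thus "l \<in> K \<alpha> c" using a0b unfolding K_def a0_def b0_def by auto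
qed


definition T1 :: "real \<Rightarrow> real \<Rightarrow> real \<Rightarrow> real \<Rightarrow> (real \<times> real \<times> real) set" where
  "T1 \<alpha> \<delta> c q = {z. 0 \<le> fst z \<and> fst z \<le> 1 \<and> lo \<delta> (fst z) \<le> fst (snd z) \<and> fst (snd z) \<le> hi \<delta> (fst z) \<and>
     lo \<delta> q \<le> snd (snd z) \<and> snd (snd z) \<le> hi \<delta> q \<and> snd z \<in> K \<alpha> c}"

definition T2 :: "real \<Rightarrow> real \<Rightarrow> real \<Rightarrow> real \<Rightarrow> (real \<times> real \<times> real) set" where
  "T2 \<alpha> \<delta> c q = {z. 0 \<le> fst z \<and> fst z \<le> 1 \<and> lo \<delta> (fst z) \<le> fst (snd z) \<and> fst (snd z) \<le> hi \<delta> (fst z) \<and>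
     lo \<delta> q \<le> snd (snd z) \<and> snd (snd z) \<le> hi \<delta> q \<and> (snd (snd z), fst (snd z)) \<in> K \<alpha> c}"

lemma cont_lo: "\<delta> < 1 \<Longrightarrow> continuous_on UNIV (\<lambda>z::real \<times> real \<times> real. lo \<delta> (fst z))"
  unfolding lo_def by (intro continuous_intros) auto

lemma cont_hi: "\<delta> < 1 \<Longrightarrow> continuous_on UNIV (\<lambda>z::real \<times> real \<times> real. hi \<delta> (fst z))"
  unfolding hi_def by (intro continuous_intros) auto

lemma compact_T1:
  assumes "\<alpha> > 1" "\<delta> < 1"
  shows "compact (T1 \<alpha> \<delta> c q)"
proof -
  have cK: "closed {z::real \<times> real \<times> real. snd z \<in> K \<alpha> c}"
    using closed_vimage_snd[OF closed_K[OF assms(1)]] by (simp add: vimage_def)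
  have "closed (T1 \<alpha> \<delta> c q)"
    unfolding T1_def
    by (intro closed_Collect_conj closed_Collect_le cK cont_lo cont_hi assms(2) continuous_intros)
  moreover have "T1 \<alpha> \<delta> c q = ({0..1} \<times> ({0..1} \<times> {0..1})) \<inter> T1 \<alpha> \<delta> c q"
    by (auto simp: T1_def K_def)
  ultimately show ?thesis
    by (metis compact_Int_closed compact_Icc compact_Times)
qed

lemma compact_T2:
  assumes "\<alpha> > 1" "\<delta> < 1"
  shows "compact (T2 \<alpha> \<delta> c q)"
proof -
  have "closed ((\<lambda>z::real \<times> real \<times> real. (snd (snd z), fst (snd z))) -` K \<alpha> c)"
    by (intro closed_vimage closed_K assms(1) continuous_intros)
  hence cK: "closed {z::real \<times> real \<times> real. (snd (snd z), fst (snd z)) \<in> K \<alpha> c}"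
    by (simp add: vimage_def)
  have "closed (T2 \<alpha> \<delta> c q)"
    unfolding T2_def
    by (intro closed_Collect_conj closed_Collect_le cK cont_lo cont_hi assms(2) continuous_intros)
  moreover have "T2 \<alpha> \<delta> c q = ({0..1} \<times> ({0..1} \<times> {0..1})) \<inter> T2 \<alpha> \<delta> c q"
    by (auto simp: T2_def K_def)
  ultimately show ?thesis
    by (metis compact_Int_closed compact_Icc compact_Times)
qed


lemma approx_self: "approx_renyi_div \<delta> \<alpha> P P \<le> 0"
  by (rule approx_common[where R = P and P'' = P and Q'' = P]) (auto simp: algebra_simps)

lemma adm_max:
  assumes "\<alpha> > 1" "0 < \<delta>" "\<delta> < 1" "\<epsilon> > 0"
  shows "\<exists>s. (\<delta> \<le> s \<and> s \<le> 1 \<and>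
      approx_renyi_div \<delta> \<alpha> (bernoulli_pmf s) (bernoulli_pmf \<delta>) \<le> ereal \<epsilon> \<and>
      approx_renyi_div \<delta> \<alpha> (bernoulli_pmf \<delta>) (bernoulli_pmf s) \<le> ereal \<epsilon>) \<and>
    (\<forall>t. (\<delta> \<le> t \<and> t \<le> 1 \<and>
      approx_renyi_div \<delta> \<alpha> (bernoulli_pmf t) (bernoulli_pmf \<delta>) \<le> ereal \<epsilon> \<and>
      approx_renyi_div \<delta> \<alpha> (bernoulli_pmf \<delta>) (bernoulli_pmf t) \<le> ereal \<epsilon>) \<longrightarrow> t \<le> s)"
proof -
  define P where "P = (\<lambda>p. \<delta> \<le> p \<and> p \<le> 1 \<and>
      approx_renyi_div \<delta> \<alpha> (bernoulli_pmf p) (bernoulli_pmf \<delta>) \<le> ereal \<epsilon> \<and>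
      approx_renyi_div \<delta> \<alpha> (bernoulli_pmf \<delta>) (bernoulli_pmf p) \<le> ereal \<epsilon>)"
  define C where "C = (\<lambda>\<eta>::real. exp ((\<alpha> - 1) * (\<epsilon> + \<eta>)))"
  have eq: "{p. P p} = {\<delta>..1} \<inter> (\<Inter>\<eta>\<in>{0<..}. fst ` T1 \<alpha> \<delta> (C \<eta>) \<delta> \<inter> fst ` T2 \<alpha> \<delta> (C \<eta>) \<delta>)"
  proof (intro equalityI subsetI)
    fix p assume "p \<in> {p. P p}"
    hence p: "P p" by simp
    have "p \<in> fst ` T1 \<alpha> \<delta> (C \<eta>) \<delta> \<inter> fst ` T2 \<alpha> \<delta> (C \<eta>) \<delta>" if eta: "\<eta> > 0" for \<eta>
    proof
      obtain a b where ab: "lo \<delta> p \<le> a \<and> a \<le> hi \<delta> p \<and> lo \<delta> \<delta> \<le> b \<and> b \<le> hi \<delta> \<delta> \<and>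
         0 \<le> a \<and> a \<le> 1 \<and> 0 \<le> b \<and> b \<le> 1 \<and> okf a b \<and> hf \<alpha> a b \<le> C \<eta>"
        using approx_bern_fwd[OF assms(1-3), of p \<delta> \<epsilon> \<eta>] p eta assms unfolding P_def C_def by auto
      show "p \<in> fst ` T1 \<alpha> \<delta> (C \<eta>) \<delta>"
        by (rule image_eqI[where x = "(p, a, b)"]) (use ab p assms in \<open>auto simp: T1_def K_def P_def\<close>)
      obtain a b where ab: "lo \<delta> \<delta> \<le> a \<and> a \<le> hi \<delta> \<delta> \<and> lo \<delta> p \<le> b \<and> b \<le> hi \<delta> p \<and>
         0 \<le> a \<and> a \<le> 1 \<and> 0 \<le> b \<and> b \<le> 1 \<and> okf a b \<and> hf \<alpha> a b \<le> C \<eta>"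
        using approx_bern_fwd[OF assms(1-3), of \<delta> p \<epsilon> \<eta>] p eta assms unfolding P_def C_def by auto
      show "p \<in> fst ` T2 \<alpha> \<delta> (C \<eta>) \<delta>"
        by (rule image_eqI[where x = "(p, b, a)"]) (use ab p assms in \<open>auto simp: T2_def K_def P_def\<close>)
    qed
    thus "p \<in> {\<delta>..1} \<inter> (\<Inter>\<eta>\<in>{0<..}. fst ` T1 \<alpha> \<delta> (C \<eta>) \<delta> \<inter> fst ` T2 \<alpha> \<delta> (C \<eta>) \<delta>)"
      using p unfolding P_def by auto
  next
    fix p assume pm: "p \<in> {\<delta>..1} \<inter> (\<Inter>\<eta>\<in>{0<..}. fst ` T1 \<alpha> \<delta> (C \<eta>) \<delta> \<inter> fst ` T2 \<alpha> \<delta> (C \<eta>) \<delta>)"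
    hence p: "\<delta> \<le> p" "p \<le> 1" by auto
    have A1: "approx_renyi_div \<delta> \<alpha> (bernoulli_pmf p) (bernoulli_pmf \<delta>) \<le> ereal \<epsilon>"
    proof (rule approx_bern_bwd[OF assms(1-3)])
      show "0 \<le> p" "p \<le> 1" "0 \<le> \<delta>" "\<delta> \<le> 1" using p assms by auto
      show "\<forall>\<eta>>0. \<exists>a b. lo \<delta> p \<le> a \<and> a \<le> hi \<delta> p \<and> lo \<delta> \<delta> \<le> b \<and> b \<le> hi \<delta> \<delta> \<and>
        okf a b \<and> hf \<alpha> a b \<le> exp ((\<alpha> - 1) * (\<epsilon> + \<eta>))"
      proof (intro allI impI)
        fix \<eta> :: real assume "\<eta> > 0"
        hence "p \<in> fst ` T1 \<alpha> \<delta> (C \<eta>) \<delta>" using pm by auto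
        then obtain z where "z \<in> T1 \<alpha> \<delta> (C \<eta>) \<delta>" "p = fst z" by blast
        thus "\<exists>a b. lo \<delta> p \<le> a \<and> a \<le> hi \<delta> p \<and> lo \<delta> \<delta> \<le> b \<and> b \<le> hi \<delta> \<delta> \<and>
          okf a b \<and> hf \<alpha> a b \<le> exp ((\<alpha> - 1) * (\<epsilon> + \<eta>))"
          unfolding T1_def K_def C_def by auto
      qed
    qed
    have A2: "approx_renyi_div \<delta> \<alpha> (bernoulli_pmf \<delta>) (bernoulli_pmf p) \<le> ereal \<epsilon>"
    proof (rule approx_bern_bwd[OF assms(1-3)])
      show "0 \<le> p" "p \<le> 1" "0 \<le> \<delta>" "\<delta> \<le> 1" using p assms by auto
      show "\<forall>\<eta>>0. \<exists>a b. lo \<delta> \<delta> \<le> a \<and> a \<le> hi \<delta> \<delta> \<and> lo \<delta> p \<le> b \<and> b \<le> hi \<delta> p \<and>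
        okf a b \<and> hf \<alpha> a b \<le> exp ((\<alpha> - 1) * (\<epsilon> + \<eta>))"
      proof (intro allI impI)
        fix \<eta> :: real assume "\<eta> > 0"
        hence "p \<in> fst ` T2 \<alpha> \<delta> (C \<eta>) \<delta>" using pm by auto
        then obtain z where "z \<in> T2 \<alpha> \<delta> (C \<eta>) \<delta>" "p = fst z" by blast
        thus "\<exists>a b. lo \<delta> \<delta> \<le> a \<and> a \<le> hi \<delta> \<delta> \<and> lo \<delta> p \<le> b \<and> b \<le> hi \<delta> p \<and>
          okf a b \<and> hf \<alpha> a b \<le> exp ((\<alpha> - 1) * (\<epsilon> + \<eta>))"
          unfolding T2_def K_def C_def by auto
      qed
    qed
    show "p \<in> {p. P p}" using p A1 A2 unfolding P_def by simp
  qed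
  have cl: "closed (\<Inter>\<eta>\<in>{0<..}. fst ` T1 \<alpha> \<delta> (C \<eta>) \<delta> \<inter> fst ` T2 \<alpha> \<delta> (C \<eta>) \<delta>)"
    by (intro closed_INT ballI closed_Int compact_imp_closed compact_continuous_image
        compact_T1 compact_T2 assms continuous_intros)
  have comp: "compact {p. P p}" unfolding eq by (rule compact_Int_closed[OF compact_Icc cl])
  have "P \<delta>" unfolding P_def using approx_self[of \<delta> \<alpha> "bernoulli_pmf \<delta>"] assms
    by (auto intro: order_trans)
  hence "{p. P p} \<noteq> {}" by blast
  from compact_attains_sup[OF comp this] obtain s where "P s" "\<forall>t. P t \<longrightarrow> t \<le> s" by auto
  thus ?thesis unfolding P_def by blast
qed


lemma pi1:
  assumes "\<alpha> > 1" "0 < \<delta>" "\<delta> < 1" "\<epsilon> > 0"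
  shows "pi_star \<delta> \<alpha> \<epsilon> 1 = \<delta>"
proof -
  have d1: "\<forall>x. pmf (bernoulli_pmf \<delta>) x = (1 - \<delta>) * pmf (bernoulli_pmf 0) x + \<delta> * pmf (bernoulli_pmf 1) x"
  proof
    fix x show "pmf (bernoulli_pmf \<delta>) x = (1 - \<delta>) * pmf (bernoulli_pmf 0) x + \<delta> * pmf (bernoulli_pmf 1) x"
      using assms by (cases x) (simp_all add: pmf_bernoulli_True pmf_bernoulli_False)
  qed
  have d0: "\<forall>x. pmf (bernoulli_pmf 0) x = (1 - \<delta>) * pmf (bernoulli_pmf 0) x + \<delta> * pmf (bernoulli_pmf 0) x"
    by (simp add: algebra_simps)
  have A1: "approx_renyi_div \<delta> \<alpha> (bernoulli_pmf \<delta>) (bernoulli_pmf 0) \<le> ereal \<epsilon>"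
    using approx_common[OF d1 d0, of \<alpha>] assms(4) by (auto intro: order_trans)
  have A2: "approx_renyi_div \<delta> \<alpha> (bernoulli_pmf 0) (bernoulli_pmf \<delta>) \<le> ereal \<epsilon>"
    using approx_common[OF d0 d1, of \<alpha>] assms(4) by (auto intro: order_trans)
  have "L_fun \<delta> \<alpha> \<epsilon> 0 = \<delta>"
    unfolding L_fun_def
  proof (rule Greatest_equality)
    show "0 \<le> \<delta> \<and> \<delta> \<le> 1 \<and> approx_renyi_div \<delta> \<alpha> (bernoulli_pmf \<delta>) (bernoulli_pmf 0) \<le> ereal \<epsilon> \<and>
        approx_renyi_div \<delta> \<alpha> (bernoulli_pmf 0) (bernoulli_pmf \<delta>) \<le> ereal \<epsilon>"
      using A1 A2 assms by auto
  next
    fix y assume y: "0 \<le> y \<and> y \<le> 1 \<and> approx_renyi_div \<delta> \<alpha> (bernoulli_pmf y) (bernoulli_pmf 0) \<le> ereal \<epsilon> \<and>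
        approx_renyi_div \<delta> \<alpha> (bernoulli_pmf 0) (bernoulli_pmf y) \<le> ereal \<epsilon>"
    have "sum (pmf (bernoulli_pmf y)) {True} \<le> \<delta>"
      by (rule approx_zero[of \<delta> \<alpha> _ _ \<epsilon>]) (use y assms in \<open>auto simp: pmf_bernoulli_True\<close>)
    thus "y \<le> \<delta>" using y by (simp add: pmf_bernoulli_True)
  qed
  thus ?thesis by simp
qed

lemma pi2:
  assumes "\<alpha> > 1" "0 < \<delta>" "\<delta> < 1" "\<epsilon> > 0"
  shows "\<delta> \<le> pi_star \<delta> \<alpha> \<epsilon> 2 \<and> pi_star \<delta> \<alpha> \<epsilon> 2 \<le> 1 \<and>
      approx_renyi_div \<delta> \<alpha> (bernoulli_pmf (pi_star \<delta> \<alpha> \<epsilon> 2)) (bernoulli_pmf \<delta>) \<le> ereal \<epsilon> \<and>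
      approx_renyi_div \<delta> \<alpha> (bernoulli_pmf \<delta>) (bernoulli_pmf (pi_star \<delta> \<alpha> \<epsilon> 2)) \<le> ereal \<epsilon>"
proof -
  have e: "pi_star \<delta> \<alpha> \<epsilon> 2 = L_fun \<delta> \<alpha> \<epsilon> \<delta>"
    using pi1[OF assms] by (simp add: numeral_2_eq_2)
  obtain s where s: "\<delta> \<le> s \<and> s \<le> 1 \<and>
      approx_renyi_div \<delta> \<alpha> (bernoulli_pmf s) (bernoulli_pmf \<delta>) \<le> ereal \<epsilon> \<and>
      approx_renyi_div \<delta> \<alpha> (bernoulli_pmf \<delta>) (bernoulli_pmf s) \<le> ereal \<epsilon>"
    "\<forall>t. (\<delta> \<le> t \<and> t \<le> 1 \<and>
      approx_renyi_div \<delta> \<alpha> (bernoulli_pmf t) (bernoulli_pmf \<delta>) \<le> ereal \<epsilon> \<and>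
      approx_renyi_div \<delta> \<alpha> (bernoulli_pmf \<delta>) (bernoulli_pmf t) \<le> ereal \<epsilon>) \<longrightarrow> t \<le> s"
    using adm_max[OF assms] by blast
  have "L_fun \<delta> \<alpha> \<epsilon> \<delta> = s" unfolding L_fun_def
    by (rule Greatest_equality) (use s in auto)
  thus ?thesis using e s(1) by simp
qed

definition fA :: "bool \<Rightarrow> nat set" where "fA b = (if b then {1, 2} else {})"
definition fB :: "bool \<Rightarrow> nat set" where "fB b = (if b then {1} else {})"

lemma inj_fA: "inj fA" unfolding fA_def inj_def by auto
lemma inj_fB: "inj fB" unfolding fB_def inj_def by auto

lemma pmf_map_bool:
  assumes "inj f" "0 \<le> p" "p \<le> 1"
  shows "pmf (map_pmf f (bernoulli_pmf p)) S =
    p * pmf (return_pmf (f True)) S + (1 - p) * pmf (return_pmf (f False)) S"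
proof -
  have ne: "f True \<noteq> f False" using assms(1) unfolding inj_def by blast
  show ?thesis
  proof (cases "S \<in> range f")
    case True
    then obtain b where b: "S = f b" by blast
    show ?thesis using ne assms b pmf_map_inj'[OF assms(1), of "bernoulli_pmf p" b]
      by (cases b) (auto simp: pmf_bernoulli_True pmf_bernoulli_False pmf_return)
  next
    case False
    hence "S \<notin> f ` set_pmf (bernoulli_pmf p)" by blast
    moreover have "S \<noteq> f True" "S \<noteq> f False" using False by auto
    ultimately show ?thesis by (simp add: pmf_map_outside pmf_return)
  qed
qed

definition MA :: "real \<Rightarrow> (nat \<Rightarrow> nat) \<Rightarrow> nat set pmf" where
  "MA \<delta> X = (if 0 < X 1 \<and> 0 < X 2 then map_pmf fA (bernoulli_pmf \<delta>) else return_pmf {})"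

definition MB :: "real \<Rightarrow> real \<Rightarrow> (nat \<Rightarrow> nat) \<Rightarrow> nat set pmf" where
  "MB \<delta> p X = (if 3 \<le> X 1 then map_pmf fB (bernoulli_pmf p)
      else if 1 \<le> X 1 then map_pmf fB (bernoulli_pmf \<delta>) else return_pmf {})"

lemma MA_decomp:
  assumes "0 \<le> \<delta>" "\<delta> \<le> 1"
  shows "\<exists>D. \<forall>S. pmf (MA \<delta> X) S = (1 - \<delta>) * pmf (return_pmf {}) S + \<delta> * pmf D S"
proof (cases "0 < X 1 \<and> 0 < X 2")
  case True
  show ?thesis
    by (rule exI[of _ "return_pmf {1, 2}"])
       (use True assms in \<open>simp add: MA_def pmf_map_bool[OF inj_fA] fA_def algebra_simps\<close>)
next
  case False
  show ?thesis
  proof (rule exI[of _ "return_pmf {}"])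
    have "MA \<delta> X = return_pmf {}" unfolding MA_def by (rule if_not_P[OF False])
    thus "\<forall>S. pmf (MA \<delta> X) S = (1 - \<delta>) * pmf (return_pmf {}) S + \<delta> * pmf (return_pmf {}) S"
      by (simp add: algebra_simps)
  qed
qed

lemma MA_rdp:
  assumes "0 \<le> \<delta>" "\<delta> \<le> 1" "\<epsilon> > 0"
  shows "is_rdp {1, 2} 2 \<delta> \<alpha> \<epsilon> (MA \<delta>)"
proof -
  have "approx_renyi_div \<delta> \<alpha> (MA \<delta> X) (MA \<delta> X') \<le> ereal \<epsilon>" for X X'
  proof -
    obtain D where D: "\<forall>S. pmf (MA \<delta> X) S = (1 - \<delta>) * pmf (return_pmf {}) S + \<delta> * pmf D S"
      using MA_decomp[OF assms(1,2)] by blast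
    obtain D' where D': "\<forall>S. pmf (MA \<delta> X') S = (1 - \<delta>) * pmf (return_pmf {}) S + \<delta> * pmf D' S"
      using MA_decomp[OF assms(1,2)] by blast
    show ?thesis using approx_common[OF D D', of \<alpha>] assms(3) by (auto intro: order_trans)
  qed
  thus ?thesis unfolding is_rdp_def by blast
qed

lemma MA_ps: "partition_selection {1, 2} (MA \<delta>)"
  unfolding partition_selection_def MA_def by (auto simp: fA_def)

lemma MB_ps: "partition_selection {1, 2} (MB \<delta> p)"
  unfolding partition_selection_def MB_def by (auto simp: fB_def)


lemma MB_rdp:
  assumes "0 < \<delta>" "\<delta> < 1" "\<epsilon> > 0" "\<delta> \<le> p" "p \<le> 1"
    "approx_renyi_div \<delta> \<alpha> (bernoulli_pmf p) (bernoulli_pmf \<delta>) \<le> ereal \<epsilon>"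
    "approx_renyi_div \<delta> \<alpha> (bernoulli_pmf \<delta>) (bernoulli_pmf p) \<le> ereal \<epsilon>"
  shows "is_rdp {1, 2} 2 \<delta> \<alpha> \<epsilon> (MB \<delta> p)"
proof -
  let ?P2 = "map_pmf fB (bernoulli_pmf p)"
  let ?P1 = "map_pmf fB (bernoulli_pmf \<delta>)"
  let ?P0 = "return_pmf ({} :: nat set)"
  have self: "approx_renyi_div \<delta> \<alpha> Q Q \<le> ereal \<epsilon>" for Q :: "nat set pmf"
    using approx_self[of \<delta> \<alpha> Q] assms(3) by (auto intro: order_trans)
  have h21: "approx_renyi_div \<delta> \<alpha> ?P2 ?P1 \<le> ereal \<epsilon>"
    using approx_map[OF inj_fB, of \<delta> \<alpha> "bernoulli_pmf p" "bernoulli_pmf \<delta>"] assms(6) by simp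
  have h12: "approx_renyi_div \<delta> \<alpha> ?P1 ?P2 \<le> ereal \<epsilon>"
    using approx_map[OF inj_fB, of \<delta> \<alpha> "bernoulli_pmf \<delta>" "bernoulli_pmf p"] assms(7) by simp
  have d1: "\<forall>S. pmf ?P1 S = (1 - \<delta>) * pmf ?P0 S + \<delta> * pmf (return_pmf {1}) S"
    using assms(1,2) by (simp add: pmf_map_bool[OF inj_fB] fB_def algebra_simps)
  have d0: "\<forall>S. pmf ?P0 S = (1 - \<delta>) * pmf ?P0 S + \<delta> * pmf ?P0 S"
    by (simp add: algebra_simps)
  have h10: "approx_renyi_div \<delta> \<alpha> ?P1 ?P0 \<le> ereal \<epsilon>"
    using approx_common[OF d1 d0, of \<alpha>] assms(3) by (auto intro: order_trans)
  have h01: "approx_renyi_div \<delta> \<alpha> ?P0 ?P1 \<le> ereal \<epsilon>"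
    using approx_common[OF d0 d1, of \<alpha>] assms(3) by (auto intro: order_trans)
  have key: "approx_renyi_div \<delta> \<alpha> (MB \<delta> p X) (MB \<delta> p X') \<le> ereal \<epsilon>"
    if "\<bar>int (X 1) - int (X' 1)\<bar> \<le> 2" for X X'
  proof -
    have e2: "MB \<delta> p Y = ?P2" if "3 \<le> Y 1" for Y unfolding MB_def using that by simp
    have e1: "MB \<delta> p Y = ?P1" if "1 \<le> Y 1" "\<not> 3 \<le> Y 1" for Y unfolding MB_def using that by simp
    have e0: "MB \<delta> p Y = ?P0" if "\<not> 1 \<le> Y 1" "\<not> 3 \<le> Y 1" for Y unfolding MB_def using that by simp
    have nn: "\<not> (3 \<le> X 1 \<and> \<not> 1 \<le> X' 1)" "\<not> (3 \<le> X' 1 \<and> \<not> 1 \<le> X 1)" using that by linarith+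
    show ?thesis
    proof (cases "3 \<le> X 1")
      case X2: True
      show ?thesis
      proof (cases "3 \<le> X' 1")
        case True thus ?thesis using X2 e2 self by metis
      next
        case False
        hence "1 \<le> X' 1" using nn X2 by blast
        thus ?thesis using X2 False e2 e1 h21 by metis
      qed
    next
      case X2: False
      show ?thesis
      proof (cases "1 \<le> X 1")
        case X1: True
        show ?thesis
        proof (cases "3 \<le> X' 1")
          case True thus ?thesis using X2 X1 e2 e1 h12 by metis
        next
          case False
          show ?thesis
          proof (cases "1 \<le> X' 1")
            case True thus ?thesis using X2 X1 False e1 self by metis
          next
            case F2: False thus ?thesis using X2 X1 False e1 e0 h10 by metis
          qed
        qed
      next
        case X0: False
        have "\<not> 3 \<le> X' 1" using nn X0 by blast
        show ?thesis
        proof (cases "1 \<le> X' 1")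
          case True thus ?thesis using X2 X0 \<open>\<not> 3 \<le> X' 1\<close> e1 e0 h01 by metis
        next
          case False thus ?thesis using X2 X0 \<open>\<not> 3 \<le> X' 1\<close> e0 self by metis
        qed
      qed
    qed
  qed
  show ?thesis unfolding is_rdp_def
  proof (intro allI impI conjI)
    fix X X' :: "nat \<Rightarrow> nat" assume "l1_neighbors {1, 2} 2 X X'"
    hence "\<bar>int (X 1) - int (X' 1)\<bar> + \<bar>int (X 2) - int (X' 2)\<bar> \<le> 2"
      unfolding l1_neighbors_def by simp
    hence a: "\<bar>int (X 1) - int (X' 1)\<bar> \<le> 2" "\<bar>int (X' 1) - int (X 1)\<bar> \<le> 2" by linarith+
    show "approx_renyi_div \<delta> \<alpha> (MB \<delta> p X) (MB \<delta> p X') \<le> ereal \<epsilon>" by (rule key[of X X', OF a(1)])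
    show "approx_renyi_div \<delta> \<alpha> (MB \<delta> p X') (MB \<delta> p X) \<le> ereal \<epsilon>" by (rule key[of X' X, OF a(2)])
  qed
qed

definition ds :: "nat \<Rightarrow> nat \<Rightarrow> nat \<Rightarrow> nat" where
  "ds a b = (\<lambda>u. if u = 1 then a else if u = 2 then b else 0)"

lemma ds_dataset: "dataset {1, 2} (ds a b)" unfolding dataset_def ds_def by auto

lemma ds_simps [simp]: "ds a b 1 = a" "ds a b 2 = b" unfolding ds_def by auto

lemma MA_size:
  assumes "0 \<le> \<delta>" "\<delta> \<le> 1"
  shows "expected_size (MA \<delta> (ds 1 1)) = 2 * \<delta>"
  using assms unfolding expected_size_def MA_def
  by (simp add: integral_map_pmf integral_bernoulli_pmf fA_def ds_def)

lemma MB_size: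
  assumes "0 \<le> p" "p \<le> 1"
  shows "expected_size (MB \<delta> p (ds 3 1)) = p"
  using assms unfolding expected_size_def MB_def
  by (simp add: integral_map_pmf integral_bernoulli_pmf fB_def ds_def)

lemma sub12: "a \<subseteq> {1, 2::nat} \<Longrightarrow> a = {} \<or> a = {1} \<or> a = {2} \<or> a = {1, 2}"
proof -
  assume "a \<subseteq> {1, 2::nat}"
  hence "a \<in> Pow {1, 2}" by simp
  also have "Pow {1, 2::nat} = {{}, {1}, {2}, {1, 2}}" by (simp add: Pow_insert insert_commute)
  finally show ?thesis by simp
qed

lemma size_formula:
  assumes "\<forall>S\<in>set_pmf D. S \<subseteq> {1, 2::nat}"
  shows "expected_size D = pmf D {1} + pmf D {2} + 2 * pmf D {1, 2}"
proof -
  have "expected_size D = (\<Sum>a\<in>{{1}, {2}, {1, 2::nat}}. real (card a) * pmf D a)"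
    unfolding expected_size_def
  proof (rule integral_measure_pmf_real)
    fix a assume "a \<in> set_pmf D" "real (card a) \<noteq> 0"
    hence "a \<subseteq> {1, 2}" "a \<noteq> {}" using assms by auto
    thus "a \<in> {{1}, {2}, {1, 2}}" using sub12 by blast
  qed simp
  thus ?thesis by simp
qed


theorem mainTheorem4:
  fixes \<alpha> \<epsilon> \<delta> :: real
  assumes "\<alpha> > 1" and "\<epsilon> > 0" and "0 < \<delta>" and "\<delta> < 1"
    and "pi_star \<delta> \<alpha> \<epsilon> 2 > 3 * pi_star \<delta> \<alpha> \<epsilon> 1"
  shows "\<not> (\<exists>Mstar :: (nat \<Rightarrow> nat) \<Rightarrow> nat set pmf.
            partition_selection {1, 2} Mstar \<and> is_rdp {1, 2} 2 \<delta> \<alpha> \<epsilon> Mstar \<and>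
            (\<forall>M :: (nat \<Rightarrow> nat) \<Rightarrow> nat set pmf.
               partition_selection {1, 2} M \<and> is_rdp {1, 2} 2 \<delta> \<alpha> \<epsilon> M \<longrightarrow>
               (\<forall>X. dataset {1, 2} X \<longrightarrow> expected_size (Mstar X) \<ge> expected_size (M X))))"
proof
  assume "\<exists>Mstar :: (nat \<Rightarrow> nat) \<Rightarrow> nat set pmf.
            partition_selection {1, 2} Mstar \<and> is_rdp {1, 2} 2 \<delta> \<alpha> \<epsilon> Mstar \<and>
            (\<forall>M :: (nat \<Rightarrow> nat) \<Rightarrow> nat set pmf.
               partition_selection {1, 2} M \<and> is_rdp {1, 2} 2 \<delta> \<alpha> \<epsilon> M \<longrightarrow>
               (\<forall>X. dataset {1, 2} X \<longrightarrow> expected_size (Mstar X) \<ge> expected_size (M X)))"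
  then obtain Ms :: "(nat \<Rightarrow> nat) \<Rightarrow> nat set pmf" where ps: "partition_selection {1, 2} Ms"
    and rdp: "is_rdp {1, 2} 2 \<delta> \<alpha> \<epsilon> Ms"
    and opt: "\<forall>M :: (nat \<Rightarrow> nat) \<Rightarrow> nat set pmf.
               partition_selection {1, 2} M \<and> is_rdp {1, 2} 2 \<delta> \<alpha> \<epsilon> M \<longrightarrow>
               (\<forall>X. dataset {1, 2} X \<longrightarrow> expected_size (Ms X) \<ge> expected_size (M X))"
    by blast
  define p2 where "p2 = pi_star \<delta> \<alpha> \<epsilon> 2"
  have P2: "\<delta> \<le> p2" "p2 \<le> 1"
      "approx_renyi_div \<delta> \<alpha> (bernoulli_pmf p2) (bernoulli_pmf \<delta>) \<le> ereal \<epsilon>"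
      "approx_renyi_div \<delta> \<alpha> (bernoulli_pmf \<delta>) (bernoulli_pmf p2) \<le> ereal \<epsilon>"
    using pi2[OF assms(1,3,4,2)] unfolding p2_def by auto
  have gt: "p2 > 3 * \<delta>" using assms(5) pi1[OF assms(1,3,4,2)] unfolding p2_def by simp
  have supp: "S \<subseteq> {u \<in> {1, 2}. ds a b u > 0}" if "S \<in> set_pmf (Ms (ds a b))" for a b S
    using ps ds_dataset that unfolding partition_selection_def by blast
  have sub: "\<forall>S\<in>set_pmf (Ms (ds a b)). S \<subseteq> {1, 2}" for a b using supp by blast
  have rdpD: "approx_renyi_div \<delta> \<alpha> (Ms X) (Ms X') \<le> ereal \<epsilon>"
    if "l1_neighbors {1, 2} 2 X X'" "dataset {1, 2} X" "dataset {1, 2} X'" for X X'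
    using rdp that unfolding is_rdp_def by blast
  have n1: "l1_neighbors {1, 2} 2 (ds 1 1) (ds 0 0)" by (simp add: l1_neighbors_def ds_def)
  have n2: "l1_neighbors {1, 2} 2 (ds 3 1) (ds 1 1)" by (simp add: l1_neighbors_def ds_def)
  have n3: "l1_neighbors {1, 2} 2 (ds 3 1) (ds 3 0)" by (simp add: l1_neighbors_def ds_def)
  have z00: "\<forall>S\<in>{{1}, {2}, {1, 2::nat}}. pmf (Ms (ds 0 0)) S = 0"
  proof
    fix S :: "nat set" assume S: "S \<in> {{1}, {2}, {1, 2}}"
    have "S \<notin> set_pmf (Ms (ds 0 0))"
    proof
      assume "S \<in> set_pmf (Ms (ds 0 0))"
      hence "S \<subseteq> {u \<in> {1, 2}. ds 0 0 u > 0}" by (rule supp)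
      also have "{u \<in> {1, 2}. ds 0 0 u > 0} = {}" by (auto simp: ds_def)
      finally show False using S by blast
    qed
    thus "pmf (Ms (ds 0 0)) S = 0" by (metis pmf_eq_0_set_pmf)
  qed
  have "sum (pmf (Ms (ds 1 1))) {{1}, {2}, {1, 2}} \<le> \<delta>"
    by (rule approx_zero[OF rdpD[OF n1 ds_dataset ds_dataset]]) (use assms z00 in auto)
  hence s11: "pmf (Ms (ds 1 1)) {1} + pmf (Ms (ds 1 1)) {2} + pmf (Ms (ds 1 1)) {1, 2} \<le> \<delta>"
    by simp
  have "expected_size (Ms (ds 1 1)) \<ge> expected_size (MA \<delta> (ds 1 1))"
    using opt[rule_format, OF conjI[OF MA_ps MA_rdp], OF _ _ _ ds_dataset] assms by simp
  hence "pmf (Ms (ds 1 1)) {1} + pmf (Ms (ds 1 1)) {2} + 2 * pmf (Ms (ds 1 1)) {1, 2} \<ge> 2 * \<delta>"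
    using MA_size[of \<delta>] size_formula[OF sub] assms by simp
  hence z11: "pmf (Ms (ds 1 1)) {1} = 0"
    using s11 pmf_nonneg[of "Ms (ds 1 1)" "{1}"] pmf_nonneg[of "Ms (ds 1 1)" "{2}"] by linarith
  have "sum (pmf (Ms (ds 3 1))) {{1}} \<le> \<delta>"
    by (rule approx_zero[OF rdpD[OF n2 ds_dataset ds_dataset]]) (use assms z11 in auto)
  hence q1: "pmf (Ms (ds 3 1)) {1} \<le> \<delta>" by simp
  have z30: "\<forall>S\<in>{{2}, {1, 2::nat}}. pmf (Ms (ds 3 0)) S = 0"
  proof
    fix S :: "nat set" assume S: "S \<in> {{2}, {1, 2}}"
    have "S \<notin> set_pmf (Ms (ds 3 0))"
    proof
      assume "S \<in> set_pmf (Ms (ds 3 0))"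
      hence "S \<subseteq> {u \<in> {1, 2}. ds 3 0 u > 0}" by (rule supp)
      also have "{u \<in> {1, 2}. ds 3 0 u > 0} = {1}" by (auto simp: ds_def)
      finally have "S \<subseteq> {1}" .
      moreover have "(2::nat) \<in> S" using S by auto
      ultimately show False by auto
    qed
    thus "pmf (Ms (ds 3 0)) S = 0" by (metis pmf_eq_0_set_pmf)
  qed
  have "sum (pmf (Ms (ds 3 1))) {{2}, {1, 2}} \<le> \<delta>"
    by (rule approx_zero[OF rdpD[OF n3 ds_dataset ds_dataset]]) (use assms z30 in auto)
  hence q2: "pmf (Ms (ds 3 1)) {2} + pmf (Ms (ds 3 1)) {1, 2} \<le> \<delta>" by simp
  have "expected_size (Ms (ds 3 1)) \<ge> expected_size (MB \<delta> p2 (ds 3 1))"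
    using opt[rule_format, OF conjI[OF MB_ps MB_rdp[OF assms(3,4,2) P2]], OF ds_dataset] by simp
  hence "pmf (Ms (ds 3 1)) {1} + pmf (Ms (ds 3 1)) {2} + 2 * pmf (Ms (ds 3 1)) {1, 2} \<ge> p2"
    using MB_size[of p2 \<delta>] size_formula[OF sub] P2 assms by simp
  thus False using q1 q2 gt pmf_nonneg[of "Ms (ds 3 1)" "{2}"] by linarith
qed

end
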